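(* Let $N\in\mathbb N_{\ge1}$, $\Delta\mathbf x,\mathbf y,\Delta\mathbf y\in\mathcal T^N_0$ and define $f:[0,1]\times[0,1]\to\mathcal T^N_1$ by $f(s,t)=\exp_N(s\Delta\mathbf x)\exp_N(\mathbf y+t\Delta\mathbf y)\exp_N(-\mathbf y)$. Then $f(0,0)=1$ and $$(\partial_sf)|_{(0,0)}=\Delta\mathbf x,\qquad(\partial_tf)|_{(0,0)}=G(\mathrm{ad}\,\mathbf y)(\Delta\mathbf y).$$ Moreover, for all $n\in\{2,\dots,N\}$, $$\sup_{0\le s,t\le1}\big|(\nabla^2f^{(n)})|_{(s,t)}\big|\le c_n\sum_{\|\ell\|=n,\ |\ell|\ge2}\big(|\Delta\mathbf x^{(l_1)}|+|\Delta\mathbf y^{(l_1)}|\big)\big(|\Delta\mathbf x^{(l_2)}|+|\Delta\mathbf y^{(l_2)}|\big)z_{l_3}\cdots z_{l_k},$$ where $c_n>0$ depends only on $n$, the sum is over $\ell=(l_1,\dots,l_k)\in(\mathbb N_{\ge1})^k$, $k=|\ell|\ge2$, $l_1+\dots+l_k=n$ (empty products equal $1$), and $z_l:=\max\{|\Delta\mathbf x^{(l)}|,|\mathbf y^{(l)}|,|(\mathbf y+\Delta\mathbf y)^{(l)}|\}$ for $l\in\{1,\dots,N-2\}$.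
   Context: $\mathcal T^N=\bigoplus_{k=0}^N(\mathbb R^d)^{\otimes k}$ with concatenation product truncated above level $N$; $\mathbf x^{(k)}$ is the level-$k$ component; $\mathcal T^N_0$ ($\mathcal T^N_1$) the elements with scalar part $0$ ($1$); $\exp_N$ the exponential series; $|\cdot|$ the Euclidean norm on $(\mathbb R^d)^{\otimes k}$. $\mathrm{ad}\,\mathbf x(\mathbf y)=\mathbf x\mathbf y-\mathbf y\mathbf x$ and $G(\mathrm{ad}\,\mathbf x)=\sum_{k\ge0}\frac{(\mathrm{ad}\,\mathbf x)^k}{(k+1)!}$. $|\nabla^2f^{(n)}|$ denotes a (fixed) norm of the collection of second-order partial derivatives $\partial_{ss}f^{(n)},\partial_{st}f^{(n)},\partial_{tt}f^{(n)}$ of the level-$n$ component. *)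

theory Defs
  imports "HOL-Analysis.Analysis"
begin

text \<open>Truncated tensor algebra over R^d: an element is a function from words
(lists of letters in {0..<d}) to reals, supported on words of length at most N.
The value at a word w is the coefficient of e_w.\<close>

type_synonym tens = "nat list \<Rightarrow> real"

definition words :: "nat \<Rightarrow> nat \<Rightarrow> nat list set" where
  "words d k = {w. length w = k \<and> set w \<subseteq> {..<d}}"

definition in_T :: "nat \<Rightarrow> nat \<Rightarrow> tens \<Rightarrow> bool" where
  "in_T d N x \<longleftrightarrow> (\<forall>w. x w \<noteq> 0 \<longrightarrow> length w \<le> N \<and> set w \<subseteq> {..<d})"

definition in_T0 :: "nat \<Rightarrow> nat \<Rightarrow> tens \<Rightarrow> bool" where
  "in_T0 d N x \<longleftrightarrow> in_T d N x \<and> x [] = 0"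

definition tone :: tens where
  "tone w = (if w = [] then 1 else 0)"

definition tadd :: "tens \<Rightarrow> tens \<Rightarrow> tens" where
  "tadd x y = (\<lambda>w. x w + y w)"

definition tscale :: "real \<Rightarrow> tens \<Rightarrow> tens" where
  "tscale a x = (\<lambda>w. a * x w)"

definition tmul :: "nat \<Rightarrow> tens \<Rightarrow> tens \<Rightarrow> tens" where
  "tmul N x y = (\<lambda>w. if length w \<le> N
      then (\<Sum>i\<le>length w. x (take i w) * y (drop i w)) else 0)"

definition tpow :: "nat \<Rightarrow> tens \<Rightarrow> nat \<Rightarrow> tens" where
  "tpow N x k = (tmul N x ^^ k) tone"

text \<open>Truncated exponential; for x with zero scalar part, x^k = 0 for k > N,
so this is the exponential series.\<close>
definition texp :: "nat \<Rightarrow> tens \<Rightarrow> tens" where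
  "texp N x = (\<lambda>w. \<Sum>k\<le>N. tpow N x k w / fact k)"

definition tad :: "nat \<Rightarrow> tens \<Rightarrow> tens \<Rightarrow> tens" where
  "tad N x y = (\<lambda>w. tmul N x y w - tmul N y x w)"

text \<open>G(ad x)(y) = sum_k (ad x)^k y / (k+1)!; in the truncated algebra (ad x)^k = 0
for k > N (ad x kills scalars and raises the level), so the series is this finite sum.\<close>
definition tG :: "nat \<Rightarrow> tens \<Rightarrow> tens \<Rightarrow> tens" where
  "tG N x y = (\<lambda>w. \<Sum>k\<le>N. ((tad N x) ^^ k) y w / fact (k + 1))"

definition lnorm :: "nat \<Rightarrow> nat \<Rightarrow> tens \<Rightarrow> real" where
  "lnorm d k x = sqrt (\<Sum>w\<in>words d k. (x w)\<^sup>2)"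

definition sigf :: "nat \<Rightarrow> tens \<Rightarrow> tens \<Rightarrow> tens \<Rightarrow> real \<Rightarrow> real \<Rightarrow> tens" where
  "sigf N dx y dy s t =
     tmul N (tmul N (texp N (tscale s dx)) (texp N (tadd y (tscale t dy)))) (texp N (tscale (-1) y))"

definition comps2 :: "nat \<Rightarrow> nat list set" where
  "comps2 n = {ls. (\<forall>l\<in>set ls. 1 \<le> l) \<and> sum_list ls = n \<and> 2 \<le> length ls}"

definition zz :: "nat \<Rightarrow> tens \<Rightarrow> tens \<Rightarrow> tens \<Rightarrow> nat \<Rightarrow> real" where
  "zz d dx y dy l = max (lnorm d l dx) (max (lnorm d l y) (lnorm d l (tadd y dy)))"

definition rhs_sum :: "nat \<Rightarrow> nat \<Rightarrow> tens \<Rightarrow> tens \<Rightarrow> tens \<Rightarrow> real" where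
  "rhs_sum d n dx y dy = (\<Sum>ls\<in>comps2 n.
      (lnorm d (ls!0) dx + lnorm d (ls!0) dy) * (lnorm d (ls!1) dx + lnorm d (ls!1) dy)
      * prod_list (map (zz d dx y dy) (drop 2 ls)))"

end

theory Submission
  imports Defs
begin

definition trunc :: "nat \<Rightarrow> tens \<Rightarrow> bool" where
  "trunc N x \<longleftrightarrow> (\<forall>w. N < length w \<longrightarrow> x w = 0)"

definition vanish :: "nat \<Rightarrow> tens \<Rightarrow> bool" where
  "vanish m x \<longleftrightarrow> (\<forall>w. length w < m \<longrightarrow> x w = 0)"

lemma trunc_tmul: "trunc N (tmul N x y)"
  by (simp add: trunc_def tmul_def)

lemma trunc_tone: "trunc N tone"
  by (simp add: trunc_def tone_def)

lemma tmul_tone_left: assumes "trunc N x" shows "tmul N tone x = x"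
proof
  fix w
  show "tmul N tone x w = x w"
  proof (cases "length w \<le> N")
    case True
    have "(\<Sum>i\<le>length w. tone (take i w) * x (drop i w)) = (\<Sum>i\<in>{0}. tone (take i w) * x (drop i w))"
      by (rule sum.mono_neutral_right) (auto simp: tone_def)
    then show ?thesis using True by (simp add: tmul_def tone_def)
  next
    case False
    then show ?thesis using assms by (simp add: tmul_def trunc_def)
  qed
qed

lemma tmul_tone_right: assumes "trunc N x" shows "tmul N x tone = x"
proof
  fix w
  show "tmul N x tone w = x w"
  proof (cases "length w \<le> N")
    case True
    have "(\<Sum>i\<le>length w. x (take i w) * tone (drop i w)) = (\<Sum>i\<in>{length w}. x (take i w) * tone (drop i w))"
      by (rule sum.mono_neutral_right) (auto simp: tone_def)
    then show ?thesis using True by (simp add: tmul_def tone_def)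
  next
    case False
    then show ?thesis using assms by (simp add: tmul_def trunc_def)
  qed
qed

lemma tmul_apply:
  "length w \<le> N \<Longrightarrow> tmul N x y w = (\<Sum>i\<le>length w. x (take i w) * y (drop i w))"
  by (simp add: tmul_def)

lemma tmul_take:
  assumes "i \<le> length w" "length w \<le> N"
  shows "tmul N x y (take i w) = (\<Sum>j\<le>i. x (take j w) * y (take (i - j) (drop j w)))"
proof -
  have "length (take i w) = i" using assms by simp
  then show ?thesis using assms unfolding tmul_def
    by (auto intro!: sum.cong simp: take_take drop_take min_def)
qed

lemma tmul_assoc: "tmul N (tmul N x y) z = tmul N x (tmul N y z)"
proof
  fix w
  show "tmul N (tmul N x y) z w = tmul N x (tmul N y z) w"
  proof (cases "length w \<le> N")
    case False then show ?thesis by (simp add: tmul_def)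
  next
    case True
    define l where "l = length w"
    define G where "G = (\<lambda>j k. x (take j w) * y (take k (drop j w)) * z (drop k (drop j w)))"
    have "tmul N (tmul N x y) z w = (\<Sum>i\<le>l. (\<Sum>j\<le>i. G j (i - j)))"
      using True
      apply (simp add: tmul_apply l_def[symmetric])
      apply (rule sum.cong[OF refl])
      apply (subst sum_distrib_right)
      apply (rule sum.cong[OF refl])
      apply (auto simp: G_def drop_take)
      done
    also have "\<dots> = (\<Sum>(j,k)\<in>{(j,k). j + k \<le> l}. G j k)"
      by (rule sum.triangle_reindex_eq[symmetric])
    also have "{(j,k). j + k \<le> l} = Sigma {..l} (\<lambda>j. {..l - j})" by auto
    also have "(\<Sum>(j,k)\<in>Sigma {..l} (\<lambda>j. {..l - j}). G j k) = (\<Sum>j\<le>l. \<Sum>k\<le>l-j. G j k)"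
      by (rule sum.Sigma[symmetric]) auto
    also have "\<dots> = tmul N x (tmul N y z) w"
      using True
      apply (simp add: tmul_apply l_def[symmetric])
      apply (rule sum.cong[OF refl])
      apply (simp add: sum_distrib_left G_def l_def mult.assoc)
      done
    finally show ?thesis .
  qed
qed

lemma tmul_sum_left: "tmul N (\<lambda>w. \<Sum>k\<in>K. f k w) y w = (\<Sum>k\<in>K. tmul N (f k) y w)"
  by (simp add: tmul_def sum_distrib_right sum.swap[of _ K])

lemma tmul_sum_right: "tmul N y (\<lambda>w. \<Sum>k\<in>K. f k w) w = (\<Sum>k\<in>K. tmul N y (f k) w)"
  by (simp add: tmul_def sum_distrib_left sum.swap[of _ K])

lemma tmul_scale_left: "tmul N (\<lambda>w. c * x w) y w = c * tmul N x y w"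
  by (simp add: tmul_def sum_distrib_left mult.assoc)

lemma tmul_scale_right: "tmul N y (\<lambda>w. c * x w) w = c * tmul N y x w"
  by (simp add: tmul_def sum_distrib_left mult.left_commute)

lemma tmul_add_left: "tmul N (\<lambda>w. x w + z w) y w = tmul N x y w + tmul N z y w"
  by (simp add: tmul_def sum.distrib distrib_right)

lemma tmul_add_right: "tmul N y (\<lambda>w. x w + z w) w = tmul N y x w + tmul N y z w"
  by (simp add: tmul_def sum.distrib distrib_left)

lemma tmul_diff_right: "tmul N y (\<lambda>w. x w - z w) w = tmul N y x w - tmul N y z w"
  by (simp add: tmul_def sum_subtractf right_diff_distrib)

lemma tmul_diff_left: "tmul N (\<lambda>w. x w - z w) y w = tmul N x y w - tmul N z y w"
  by (simp add: tmul_def sum_subtractf left_diff_distrib)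

lemma tmul_zero_left[simp]: "tmul N (\<lambda>_. 0) y = (\<lambda>_. 0)"
  by (simp add: tmul_def fun_eq_iff)

lemma tmul_zero_right[simp]: "tmul N y (\<lambda>_. 0) = (\<lambda>_. 0)"
  by (simp add: tmul_def fun_eq_iff)

lemma tpow_0[simp]: "tpow N x 0 = tone"
  by (simp add: tpow_def)

lemma tpow_Suc: "tpow N x (Suc k) = tmul N x (tpow N x k)"
  by (simp add: tpow_def)

lemma trunc_tpow: "trunc N (tpow N x k)"
  by (cases k) (simp_all add: tpow_Suc trunc_tmul trunc_tone)

lemma tpow_add: "tmul N (tpow N x j) (tpow N x q) = tpow N x (j + q)"
proof (induction j)
  case 0 then show ?case by (simp add: tmul_tone_left trunc_tpow)
next
  case (Suc j) then show ?case by (simp add: tpow_Suc tmul_assoc)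
qed

lemma vanish_tmul:
  assumes "vanish a x" "vanish b y" shows "vanish (a + b) (tmul N x y)"
  unfolding vanish_def
proof (intro allI impI)
  fix w :: "nat list" assume l: "length w < a + b"
  have "\<forall>i\<in>{..length w}. x (take i w) * y (drop i w) = 0"
  proof
    fix i assume iw: "i \<in> {..length w}"
    show "x (take i w) * y (drop i w) = 0"
    proof (cases "i < a")
      case True then show ?thesis using assms(1) by (simp add: vanish_def)
    next
      case False then have "length (drop i w) < b" using l iw by auto
      then show ?thesis using assms(2) by (simp add: vanish_def)
    qed
  qed
  then have "(\<Sum>i\<le>length w. x (take i w) * y (drop i w)) = 0" by (intro sum.neutral) auto
  then show "tmul N x y w = 0" by (simp add: tmul_def)
qed

lemma vanish_0: "vanish 0 x" by (simp add: vanish_def)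

lemma vanish_mono: "vanish m x \<Longrightarrow> k \<le> m \<Longrightarrow> vanish k x"
  by (simp add: vanish_def)

lemma vanish_zero[simp]: "vanish m (\<lambda>_. 0)" by (simp add: vanish_def)

lemma vanish_tpow: assumes "vanish 1 x" shows "vanish k (tpow N x k)"
proof (induction k)
  case 0 then show ?case by (simp add: vanish_0)
next
  case (Suc k) then show ?case using vanish_tmul[OF assms Suc] by (simp add: tpow_Suc)
qed

lemma vanish_trunc_zero: "vanish m x \<Longrightarrow> trunc N x \<Longrightarrow> N < m \<Longrightarrow> x w = 0"
  unfolding vanish_def trunc_def by (metis not_less less_le_trans)

lemma tpow_scale: "tpow N (\<lambda>w. c * x w) k = (\<lambda>w. c ^ k * tpow N x k w)"
proof (induction k)
  case 0 then show ?case by simp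
next
  case (Suc k)
  have "tpow N (\<lambda>w. c * x w) (Suc k) = tmul N (\<lambda>w. c*x w) (\<lambda>w. c^k * tpow N x k w)"
    by (simp add: tpow_Suc Suc.IH)
  then show ?case
    by (simp add: tpow_Suc fun_eq_iff tmul_scale_left tmul_scale_right mult.assoc)
qed

lemma regroup:
  fixes T :: "nat \<Rightarrow> real"
  assumes T0: "\<forall>m>K. T m = 0" and KP: "K \<le> P" and KQ: "K \<le> Q"
  shows "(\<Sum>p\<le>P. \<Sum>q\<le>Q. a p q * T (p + q)) = (\<Sum>m\<le>K. (\<Sum>p\<le>m. a p (m - p)) * T m)"
proof -
  have "(\<Sum>p\<le>P. \<Sum>q\<le>Q. a p q * T (p + q)) = (\<Sum>(p,q)\<in>{..P} \<times> {..Q}. a p q * T (p + q))"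
    by (rule sum.cartesian_product)
  also have "\<dots> = (\<Sum>(p,q)\<in>{(p,q). p + q \<le> K}. a p q * T (p + q))"
    apply (rule sum.mono_neutral_right)
    using T0 KP KQ apply auto
    by (meson not_le)
  also have "\<dots> = (\<Sum>m\<le>K. \<Sum>p\<le>m. a p (m - p) * T (p + (m - p)))"
    by (rule sum.triangle_reindex_eq)
  also have "\<dots> = (\<Sum>m\<le>K. (\<Sum>p\<le>m. a p (m - p)) * T m)"
    by (simp add: sum_distrib_right)
  finally show ?thesis .
qed

lemma exp_coeff: "(\<Sum>p\<le>m. (1 / fact p) * ((-1) ^ (m - p) / fact (m - p)) :: real) = (if m = 0 then 1 else 0)"
proof -
  have "(\<Sum>p\<le>m. (1 / fact p) * ((-1) ^ (m - p) / fact (m - p)) :: real)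
      = (\<Sum>p\<le>m. of_nat (m choose p) * 1 ^ p * (-1) ^ (m - p)) / fact m"
    by (simp add: sum_divide_distrib binomial_fact)
  also have "\<dots> = (1 + (-1::real)) ^ m / fact m"
    by (simp only: binomial_ring)
  finally show ?thesis by simp
qed

lemma texp_inv:
  assumes tx: "trunc N x" and vx: "vanish 1 x"
  shows "tmul N (texp N x) (texp N (\<lambda>w. -1 * x w)) = tone"
proof
  fix w
  have "tmul N (texp N x) (texp N (\<lambda>w. -1 * x w)) w
     = (\<Sum>j\<le>N. \<Sum>q\<le>N. (1 / fact j) * ((-1) ^ q / fact q) * tpow N x (j + q) w)"
    unfolding texp_def tpow_scale
    by (simp add: tmul_sum_left tmul_sum_right divide_inverse tmul_scale_left tmul_scale_right
        tpow_add mult_ac)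
  also have "\<dots> = (\<Sum>m\<le>N. (\<Sum>p\<le>m. (1 / fact p) * ((-1) ^ (m - p) / fact (m - p))) * tpow N x m w)"
    by (rule regroup) (auto intro: vanish_trunc_zero[OF vanish_tpow[OF vx] trunc_tpow])
  also have "\<dots> = (\<Sum>m\<in>{0}. (\<Sum>p\<le>m. (1 / fact p) * ((-1) ^ (m - p) / fact (m - p))) * tpow N x m w)"
    by (rule sum.mono_neutral_right) (use exp_coeff in auto)
  also have "\<dots> = tone w" by simp
  finally show "tmul N (texp N x) (texp N (\<lambda>w. -1 * x w)) w = tone w" .
qed

definition Xp :: "tens \<Rightarrow> tens \<Rightarrow> real \<Rightarrow> tens" where
  "Xp y v t = (\<lambda>w. y w + t * v w)"

fun Dk :: "nat \<Rightarrow> tens \<Rightarrow> tens \<Rightarrow> real \<Rightarrow> nat \<Rightarrow> tens" where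
  "Dk N y v t 0 = (\<lambda>_. 0)"
| "Dk N y v t (Suc k) = (\<lambda>w. tmul N v (tpow N (Xp y v t) k) w + tmul N (Xp y v t) (Dk N y v t k) w)"

fun DDk :: "nat \<Rightarrow> tens \<Rightarrow> tens \<Rightarrow> real \<Rightarrow> nat \<Rightarrow> tens" where
  "DDk N y v t 0 = (\<lambda>_. 0)"
| "DDk N y v t (Suc k) = (\<lambda>w. 2 * tmul N v (Dk N y v t k) w + tmul N (Xp y v t) (DDk N y v t k) w)"

definition ED :: "nat \<Rightarrow> tens \<Rightarrow> tens \<Rightarrow> real \<Rightarrow> tens" where
  "ED N y v t = (\<lambda>w. \<Sum>k\<le>N. Dk N y v t k w / fact k)"

definition EDD :: "nat \<Rightarrow> tens \<Rightarrow> tens \<Rightarrow> real \<Rightarrow> tens" where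
  "EDD N y v t = (\<lambda>w. \<Sum>k\<le>N. DDk N y v t k w / fact k)"

lemma deriv_tmul:
  assumes F: "\<And>w. ((\<lambda>t. F t w) has_real_derivative F' w) (at t0 within S)"
    and G: "\<And>w. ((\<lambda>t. G t w) has_real_derivative G' w) (at t0 within S)"
  shows "((\<lambda>t. tmul N (F t) (G t) w) has_real_derivative (tmul N F' (G t0) w + tmul N (F t0) G' w)) (at t0 within S)"
proof (cases "length w \<le> N")
  case True
  have "((\<lambda>t. \<Sum>i\<le>length w. F t (take i w) * G t (drop i w)) has_real_derivative
     (\<Sum>i\<le>length w. F t0 (take i w) * G' (drop i w) + F' (take i w) * G t0 (drop i w))) (at t0 within S)"
    by (intro DERIV_sum DERIV_mult' F G)
  then show ?thesis using True
    by (simp add: tmul_apply sum.distrib add.commute)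
next
  case False then show ?thesis by (simp add: tmul_def)
qed

lemma deriv_tmul_left:
  assumes F: "\<And>w. ((\<lambda>t. F t w) has_real_derivative F' w) (at t0 within S)"
  shows "((\<lambda>t. tmul N (F t) G w) has_real_derivative tmul N F' G w) (at t0 within S)"
  using deriv_tmul[OF F, of "\<lambda>_. G" "\<lambda>_. 0"] by simp

lemma deriv_tmul_right:
  assumes G: "\<And>w. ((\<lambda>t. G t w) has_real_derivative G' w) (at t0 within S)"
  shows "((\<lambda>t. tmul N F (G t) w) has_real_derivative tmul N F G' w) (at t0 within S)"
  using deriv_tmul[OF _ G, of "\<lambda>_. F" "\<lambda>_. 0"] by simp

lemma deriv_Xp: "((\<lambda>t. Xp y v t w) has_real_derivative v w) (at t0 within S)"
  unfolding Xp_def by (auto intro!: derivative_eq_intros)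

lemma deriv_tpow: "((\<lambda>t. tpow N (Xp y v t) k w) has_real_derivative Dk N y v t0 k w) (at t0 within S)"
proof (induction k arbitrary: w)
  case 0 then show ?case by simp
next
  case (Suc k)
  show ?case unfolding tpow_Suc by (rule DERIV_cong[OF deriv_tmul[OF deriv_Xp Suc.IH]]) simp
qed

lemma deriv_Dk: "((\<lambda>t. Dk N y v t k w) has_real_derivative DDk N y v t0 k w) (at t0 within S)"
proof (induction k arbitrary: w)
  case 0 then show ?case by simp
next
  case (Suc k)
  have a: "((\<lambda>t. tmul N v (tpow N (Xp y v t) k) w) has_real_derivative tmul N v (Dk N y v t0 k) w) (at t0 within S)"
    by (rule deriv_tmul_right[OF deriv_tpow])
  have b: "((\<lambda>t. tmul N (Xp y v t) (Dk N y v t k) w) has_real_derivative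
      tmul N v (Dk N y v t0 k) w + tmul N (Xp y v t0) (DDk N y v t0 k) w) (at t0 within S)"
    by (rule deriv_tmul[OF deriv_Xp Suc.IH])
  show ?case using DERIV_add[OF a b] by simp
qed

lemma deriv_texp: "((\<lambda>t. texp N (Xp y v t) w) has_real_derivative ED N y v t0 w) (at t0 within S)"
  unfolding texp_def ED_def by (intro DERIV_sum DERIV_cdivide deriv_tpow)

lemma deriv_ED: "((\<lambda>t. ED N y v t w) has_real_derivative EDD N y v t0 w) (at t0 within S)"
  unfolding EDD_def ED_def by (intro DERIV_sum DERIV_cdivide deriv_Dk)

lemma Xp_0[simp]: "Xp y v 0 = y" by (simp add: Xp_def)

lemma tpow_zero_Suc[simp]: "tpow N (\<lambda>_. 0) (Suc k) = (\<lambda>_. 0)"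
  by (simp add: tpow_Suc)

lemma texp_zero: "texp N (\<lambda>_. 0) = tone"
proof
  fix w
  have "texp N (\<lambda>_. 0) w = (\<Sum>k\<in>{0}. tpow N (\<lambda>_. 0) k w / fact k)"
    unfolding texp_def
    apply (rule sum.mono_neutral_right)
       apply auto
    apply (case_tac i)
     apply auto
    done
  then show "texp N (\<lambda>_. 0) w = tone w" by simp
qed

lemma trunc_sum: "(\<And>k. trunc N (f k)) \<Longrightarrow> trunc N (\<lambda>w. \<Sum>k\<in>K. f k w / c k)"
  by (simp add: trunc_def)

lemma trunc_add: "trunc N f \<Longrightarrow> trunc N g \<Longrightarrow> trunc N (\<lambda>w. f w + g w)"
  by (simp add: trunc_def)

lemma trunc_scale: "trunc N f \<Longrightarrow> trunc N (\<lambda>w. c * f w)"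
  by (simp add: trunc_def)

lemma trunc_texp: "trunc N (texp N x)"
  unfolding texp_def by (intro trunc_sum trunc_tpow)

lemma trunc_Dk: "trunc N (Dk N y v t k)"
  by (cases k) (auto simp: trunc_def tmul_def)

lemma trunc_ED: "trunc N (ED N y v t)"
  unfolding ED_def by (intro trunc_sum trunc_Dk)

lemma vanish_add: "vanish m f \<Longrightarrow> vanish m g \<Longrightarrow> vanish m (\<lambda>w. f w + g w)"
  by (simp add: vanish_def)

lemma vanish_scale: "vanish m f \<Longrightarrow> vanish m (\<lambda>w. c * f w)"
  by (simp add: vanish_def)

lemma vanish_Xp: "vanish 1 y \<Longrightarrow> vanish 1 v \<Longrightarrow> vanish 1 (Xp y v t)"
  by (simp add: vanish_def Xp_def)

lemma vanish_Dk: assumes "vanish 1 y" "vanish 1 v" shows "vanish k (Dk N y v t k)"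
proof (induction k)
  case 0 then show ?case by (simp add: vanish_0)
next
  case (Suc k)
  have a: "vanish (1 + k) (tmul N v (tpow N (Xp y v t) k))"
    by (intro vanish_tmul assms vanish_tpow vanish_Xp)
  have b: "vanish (1 + k) (tmul N (Xp y v t) (Dk N y v t k))"
    by (intro vanish_tmul assms vanish_tpow vanish_Xp Suc)
  show ?case using vanish_add[OF a b] by simp
qed

lemma vanish_DDk: assumes "vanish 1 y" "vanish 1 v" shows "vanish k (DDk N y v t k)"
proof (induction k)
  case 0 then show ?case by (simp add: vanish_0)
next
  case (Suc k)
  have a: "vanish (1 + k) (\<lambda>w. 2 * tmul N v (Dk N y v t k) w)"
    by (intro vanish_scale vanish_tmul assms vanish_Dk)
  have b: "vanish (1 + k) (tmul N (Xp y v t) (DDk N y v t k))"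
    by (intro vanish_tmul assms vanish_tpow vanish_Xp Suc)
  show ?case using vanish_add[OF a b] by simp
qed

lemma ED_at_zero:
  assumes "trunc N v" "1 \<le> N"
  shows "ED N (\<lambda>_. 0) v 0 = v"
proof
  fix w
  have X0: "Xp (\<lambda>_. 0) v 0 = (\<lambda>_. 0)" by (simp add: Xp_def)
  have D1: "Dk N (\<lambda>_. 0) v 0 1 = v"
    using assms by (simp add: X0 tmul_tone_right)
  have D2: "Dk N (\<lambda>_. 0) v 0 (Suc (Suc k)) = (\<lambda>_. 0)" for k
    by (simp add: X0)
  have "ED N (\<lambda>_. 0) v 0 w = (\<Sum>k\<in>{1}. Dk N (\<lambda>_. 0) v 0 k w / fact k)"
    unfolding ED_def
  proof (rule sum.mono_neutral_right)
    show "\<forall>i\<in>{..N} - {1}. Dk N (\<lambda>_. 0) v 0 i w / fact i = 0"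
    proof
      fix i assume "i \<in> {..N} - {1}"
      then have "i \<noteq> 1" by simp
      then show "Dk N (\<lambda>_. 0) v 0 i w / fact i = 0"
      proof (cases i)
        case (Suc m) then show ?thesis using \<open>i \<noteq> 1\<close> D2 by (cases m) auto
      qed simp
    qed
  qed (use assms in auto)
  then show "ED N (\<lambda>_. 0) v 0 w = v w" using D1 by simp
qed

definition MM :: "nat \<Rightarrow> tens \<Rightarrow> tens \<Rightarrow> nat \<Rightarrow> nat \<Rightarrow> tens" where
  "MM N y v i m = tmul N (tmul N (tpow N y i) v) (tpow N y m)"

lemma tpow_1: "trunc N y \<Longrightarrow> tpow N y (Suc 0) = y"
  by (simp add: tpow_Suc tmul_tone_right)

context
  fixes N :: nat and y v :: tens
  assumes ty: "trunc N y" and tv: "trunc N v" and vy: "vanish 1 y" and vv: "vanish 1 v"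
begin

lemma MM_0: "tmul N v (tpow N y k) = MM N y v 0 k"
  by (simp add: MM_def tmul_tone_left tv)

lemma MM_left: "tmul N y (MM N y v i m) = MM N y v (Suc i) m"
  by (simp add: MM_def tmul_assoc[symmetric] tpow_Suc)

lemma MM_right: "tmul N (MM N y v i m) (tpow N y q) = MM N y v i (m + q)"
  by (simp add: MM_def tmul_assoc tpow_add)

lemma MM_right1: "tmul N (MM N y v i m) y = MM N y v i (Suc m)"
  using MM_right[of i m "Suc 0"] by (simp add: tpow_1[OF ty])

lemma MM_zero: "N \<le> i + m \<Longrightarrow> MM N y v i m w = 0"
proof -
  assume "N \<le> i + m"
  have "vanish (i + 1 + m) (MM N y v i m)"
    unfolding MM_def by (intro vanish_tmul vanish_tpow vy vv)
  moreover have "trunc N (MM N y v i m)" unfolding MM_def by (rule trunc_tmul)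
  ultimately show ?thesis using \<open>N \<le> i + m\<close> by (intro vanish_trunc_zero) auto
qed

lemma Dk_closed: "Dk N y v 0 k = (\<lambda>w. \<Sum>j<k. MM N y v j (k - Suc j) w)"
proof (induction k)
  case 0 then show ?case by simp
next
  case (Suc k)
  show ?case
  proof
    fix w
    have "Dk N y v 0 (Suc k) w = MM N y v 0 k w + (\<Sum>j<k. MM N y v (Suc j) (k - Suc j) w)"
      by (simp add: Suc.IH tmul_sum_right MM_left MM_0)
    also have "\<dots> = (\<Sum>j<Suc k. MM N y v j (Suc k - Suc j) w)"
      by (subst sum.lessThan_Suc_shift) simp
    finally show "Dk N y v 0 (Suc k) w = (\<Sum>j<Suc k. MM N y v j (Suc k - Suc j) w)" .
  qed
qed

lemma tad_MM: "tad N y (MM N y v i m) = (\<lambda>w. MM N y v (Suc i) m w - MM N y v i (Suc m) w)"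
  by (simp add: tad_def MM_left MM_right1)

lemma tad_pow:
  "((tad N y) ^^ k) v = (\<lambda>w. \<Sum>i\<le>k. of_nat (k choose i) * (-1) ^ (k - i) * MM N y v i (k - i) w)"
proof (induction k)
  case 0
  have "MM N y v 0 0 = v" by (simp add: MM_def tmul_tone_left tmul_tone_right tv trunc_tmul)
  then show ?case by simp
next
  case (Suc k)
  define c where "c k i = (of_nat (k choose i) * (-1) ^ (k - i) :: real)" for k i
  show ?case
  proof
    fix w
    have "((tad N y) ^^ Suc k) v w = tad N y (\<lambda>w. \<Sum>i\<le>k. c k i * MM N y v i (k - i) w) w"
      using Suc.IH by (simp add: c_def)
    also have "\<dots> = (\<Sum>i\<le>k. c k i * MM N y v (Suc i) (k - i) w) - (\<Sum>i\<le>k. c k i * MM N y v i (Suc (k - i)) w)"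
      by (simp add: tad_def tmul_sum_left tmul_sum_right tmul_scale_left tmul_scale_right
          MM_left MM_right1)
    also have "\<dots> = (\<Sum>i\<le>Suc k. c (Suc k) i * MM N y v i (Suc k - i) w)"
    proof -
      have e1: "(\<Sum>i\<le>Suc k. c (Suc k) i * MM N y v i (Suc k - i) w)
          = c (Suc k) 0 * MM N y v 0 (Suc k) w + (\<Sum>i\<le>k. c (Suc k) (Suc i) * MM N y v (Suc i) (k - i) w)"
        by (subst sum.atMost_Suc_shift) simp
      have e2: "c (Suc k) (Suc i) = c k i - c k (Suc i)" if "i \<le> k" for i
      proof (cases "i = k")
        case True then show ?thesis by (simp add: c_def)
      next
        case False
        then have ki: "k - i = Suc (k - Suc i)" using that by simp
        show ?thesis using that by (simp add: c_def Suc_diff_le ki algebra_simps)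
      qed
      have e3: "(\<Sum>i\<le>k. c k i * MM N y v i (Suc (k - i)) w)
          = c k 0 * MM N y v 0 (Suc k) w + (\<Sum>i<k. c k (Suc i) * MM N y v (Suc i) (k - i) w)"
        by (simp add: sum.atMost_shift Suc_diff_Suc)
      have e4: "(\<Sum>i<k. c k (Suc i) * MM N y v (Suc i) (k - i) w)
          = (\<Sum>i\<le>k. c k (Suc i) * MM N y v (Suc i) (k - i) w)"
        by (simp add: lessThan_Suc_atMost[symmetric] c_def)
      have e5: "c (Suc k) 0 = - c k 0" by (simp add: c_def)
      show ?thesis
        unfolding e1 e3 e4 e5
        by (simp add: e2 left_diff_distrib sum_subtractf)
    qed
    finally show "((tad N y) ^^ Suc k) v w = (\<Sum>i\<le>Suc k. of_nat (Suc k choose i) * (-1) ^ (Suc k - i) * MM N y v i (Suc k - i) w)"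
      by (simp add: c_def)
  qed
qed

end

lemma alt_partial:
  "(\<Sum>q\<le>m. (-1) ^ q * of_nat (Suc n choose q) :: real) = (-1) ^ m * of_nat (n choose m)"
proof (induction m)
  case 0 then show ?case by simp
next
  case (Suc m)
  then show ?case by (simp add: algebra_simps)
qed

lemma coef_id:
  "(\<Sum>p\<le>m. 1 / fact (j + p + 1) * ((-1) ^ (m - p) / fact (m - p)) :: real)
    = (-1) ^ m * of_nat ((j + m) choose j) / fact (j + m + 1)"
proof -
  define n where "n = j + m + 1"
  have "(\<Sum>p\<le>m. 1 / fact (j + p + 1) * ((-1) ^ (m - p) / fact (m - p)) :: real)
      = (\<Sum>p\<le>m. (-1) ^ (m - p) * of_nat (n choose (m - p)) / fact n)"
  proof (rule sum.cong[OF refl])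
    fix p assume "p \<in> {..m}"
    then have pm: "p \<le> m" by simp
    have "(of_nat (n choose (m - p)) :: real) = fact n / (fact (m - p) * fact (n - (m - p)))"
      by (rule binomial_fact) (simp add: n_def)
    moreover have "n - (m - p) = j + p + 1" using pm by (simp add: n_def)
    ultimately show "1 / fact (j + p + 1) * ((-1) ^ (m - p) / fact (m - p)) =
        (-1) ^ (m - p) * of_nat (n choose (m - p)) / (fact n :: real)"
      by simp
  qed
  also have "\<dots> = (\<Sum>q\<le>m. (-1) ^ q * of_nat (n choose q)) / fact n"
    unfolding sum_divide_distrib
    by (rule sum.reindex_bij_witness[where i="\<lambda>p. m - p" and j="\<lambda>p. m - p"]) auto
  also have "\<dots> = (-1) ^ m * of_nat ((j + m) choose m) / fact n"
    using alt_partial[of "j + m" m] by (simp add: n_def)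
  also have "(j + m) choose m = (j + m) choose j"
    using binomial_symmetric[of m "j + m"] by simp
  finally show ?thesis by (simp add: n_def)
qed

lemma tmul_div_left: "tmul N (\<lambda>w. x w / c) y w = tmul N x y w / c"
  using tmul_scale_left[of N "inverse c" x y w] by (simp add: divide_inverse mult.commute)

lemma tmul_div_right: "tmul N y (\<lambda>w. x w / c) w = tmul N y x w / c"
  using tmul_scale_right[of N y "inverse c" x w] by (simp add: divide_inverse mult.commute)

context
  fixes N :: nat and y v :: tens
  assumes ty: "trunc N y" and tv: "trunc N v" and vy: "vanish 1 y" and vv: "vanish 1 v"
begin

definition cf :: "nat \<Rightarrow> nat \<Rightarrow> real" where
  "cf j m = (-1) ^ m * of_nat ((j + m) choose j) / fact (j + m + 1)"

lemma tG_identity: "tmul N (ED N y v 0) (texp N (\<lambda>w. -1 * y w)) = tG N y v"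
proof
  fix w
  let ?M = "MM N y v"
  define H where "H k j = (\<Sum>q\<le>N. (1 / fact k) * ((-1) ^ q / fact q) * ?M j (k - Suc j + q) w)" for k j
  define G where "G j m = cf j m * ?M j m w" for j m
  have S1: "tmul N (ED N y v 0) (texp N (\<lambda>w. -1 * y w)) w = (\<Sum>k\<le>N. \<Sum>j<k. H k j)"
    unfolding ED_def texp_def Dk_closed[OF ty tv vy vv] tpow_scale H_def
    by (simp add: tmul_sum_left tmul_sum_right tmul_div_left tmul_div_right tmul_scale_right
        MM_right[OF ty tv vy vv] sum_divide_distrib sum_distrib_left mult_ac)
  also have "\<dots> = (\<Sum>j<N. \<Sum>k\<in>{Suc j..N}. H k j)"
    by (rule sum.nested_swap')
  also have "\<dots> = (\<Sum>j<N. \<Sum>m\<le>N - Suc j. G j m)"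
  proof (rule sum.cong[OF refl])
    fix j assume "j \<in> {..<N}"
    then have jN: "j < N" by simp
    have "(\<Sum>k\<in>{Suc j..N}. H k j) = (\<Sum>p\<le>N - Suc j. H (p + Suc j) j)"
      by (rule sum.reindex_bij_witness[where i="\<lambda>p. p + Suc j" and j="\<lambda>k. k - Suc j"]) (use jN in auto)
    also have "\<dots> = (\<Sum>p\<le>N - Suc j. \<Sum>q\<le>N. (1 / fact (j + p + 1) * ((-1) ^ q / fact q)) * ?M j (p + q) w)"
      by (simp add: H_def add.commute)
    also have "\<dots> = (\<Sum>m\<le>N - Suc j. (\<Sum>p\<le>m. 1 / fact (j + p + 1) * ((-1) ^ (m - p) / fact (m - p))) * ?M j m w)"
      by (rule regroup) (auto intro: MM_zero[OF ty tv vy vv])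
    also have "\<dots> = (\<Sum>m\<le>N - Suc j. G j m)"
      by (simp only: coef_id G_def cf_def)
    finally show "(\<Sum>k\<in>{Suc j..N}. H k j) = (\<Sum>m\<le>N - Suc j. G j m)" .
  qed
  also have "\<dots> = (\<Sum>(j,m)\<in>Sigma {..<N} (\<lambda>j. {..N - Suc j}). G j m)"
    by (rule sum.Sigma) auto
  also have "Sigma {..<N} (\<lambda>j. {..N - Suc j}) = {(j,m). j + m < N}" by auto
  also have "(\<Sum>(j,m)\<in>{(j,m). j + m < N}. G j m) = (\<Sum>(j,m)\<in>{(j,m). j + m \<le> N}. G j m)"
  proof (rule sum.mono_neutral_left)
    show "finite {(j, m). j + m \<le> N}"
      by (rule finite_subset[of _ "{..N} \<times> {..N}"]) auto
  next
    show "\<forall>i\<in>{(j, m). j + m \<le> N} - {(j, m). j + m < N}. (case i of (j, m) \<Rightarrow> G j m) = 0"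
      by (auto simp: G_def intro!: MM_zero[OF ty tv vy vv])
  qed auto
  also have "\<dots> = (\<Sum>k\<le>N. \<Sum>i\<le>k. G i (k - i))"
    by (rule sum.triangle_reindex_eq)
  also have "\<dots> = tG N y v w"
    unfolding tG_def tad_pow[OF ty tv vy vv]
    by (auto simp: G_def cf_def sum_divide_distrib intro!: sum.cong)
  finally show "tmul N (ED N y v 0) (texp N (\<lambda>w. -1 * y w)) w = tG N y v w" .
qed

end

lemma lnorm_L2: "lnorm d k x = L2_set x (words d k)"
  by (simp add: lnorm_def L2_set_def)

lemma finite_words: "finite (words d k)"
proof -
  have "words d k \<subseteq> {xs. set xs \<subseteq> {..<d} \<and> length xs \<le> k}" by (auto simp: words_def)
  then show ?thesis by (rule finite_subset) (intro finite_lists_length_le, simp)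
qed

lemma lnorm_nonneg[simp]: "0 \<le> lnorm d k x"
  by (simp add: lnorm_L2)

lemma L2_set_sum_le:
  "L2_set (\<lambda>w. \<Sum>k\<in>K. f k w) A \<le> (\<Sum>k\<in>K. L2_set (f k) A)"
proof (induction K rule: infinite_finite_induct)
  case (infinite K) then show ?case by (simp add: L2_set_def)
next
  case empty then show ?case by (simp add: L2_set_def)
next
  case (insert a K)
  have "L2_set (\<lambda>w. \<Sum>k\<in>insert a K. f k w) A = L2_set (\<lambda>w. f a w + (\<Sum>k\<in>K. f k w)) A"
    using insert by simp
  also have "\<dots> \<le> L2_set (f a) A + L2_set (\<lambda>w. \<Sum>k\<in>K. f k w) A"
    by (rule L2_set_triangle_ineq)
  also have "\<dots> \<le> L2_set (f a) A + (\<Sum>k\<in>K. L2_set (f k) A)"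
    using insert by simp
  finally show ?case using insert by simp
qed

lemma lnorm_sum: "lnorm d l (\<lambda>w. \<Sum>k\<in>K. f k w) \<le> (\<Sum>k\<in>K. lnorm d l (f k))"
  unfolding lnorm_L2 by (rule L2_set_sum_le)

lemma lnorm_add: "lnorm d l (\<lambda>w. f w + g w) \<le> lnorm d l f + lnorm d l g"
  unfolding lnorm_L2 by (rule L2_set_triangle_ineq)

lemma lnorm_scale: "lnorm d l (\<lambda>w. c * f w) = \<bar>c\<bar> * lnorm d l f"
  unfolding lnorm_def by (simp add: power_mult_distrib sum_distrib_left[symmetric] real_sqrt_mult)

lemma lnorm_div: "lnorm d l (\<lambda>w. f w / c) = lnorm d l f / \<bar>c\<bar>"
  using lnorm_scale[of d l "inverse c" f] by (simp add: divide_inverse mult.commute abs_inverse)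

lemma lnorm_vanish: "vanish m x \<Longrightarrow> l < m \<Longrightarrow> lnorm d l x = 0"
  unfolding lnorm_def vanish_def words_def by simp

lemma lnorm_cong: "(\<And>w. length w = l \<Longrightarrow> f w = g w) \<Longrightarrow> lnorm d l f = lnorm d l g"
  unfolding lnorm_def words_def by simp

lemma words_0: "words d 0 = {[]}" by (auto simp: words_def)

lemma lnorm_0: "lnorm d 0 x = \<bar>x []\<bar>" by (simp add: lnorm_def words_0)

lemma lnorm_tone: "lnorm d l tone = (if l = 0 then 1 else 0)"
proof (cases "l = 0")
  case True then show ?thesis by (simp add: lnorm_0 tone_def)
next
  case False
  have "lnorm d l tone = lnorm d l (\<lambda>_. 0)"
    by (rule lnorm_cong) (use False in \<open>auto simp: tone_def\<close>)
  then show ?thesis using False by (simp add: lnorm_def)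
qed

lemma lnorm_prod:
  assumes "i \<le> l"
  shows "L2_set (\<lambda>w. x (take i w) * y (drop i w)) (words d l) = lnorm d i x * lnorm d (l - i) y"
proof -
  have "(\<Sum>w\<in>words d l. (x (take i w) * y (drop i w))\<^sup>2)
      = (\<Sum>(u,v)\<in>words d i \<times> words d (l - i). (x u * y v)\<^sup>2)"
    by (rule sum.reindex_bij_witness[where i="\<lambda>(u,v). u @ v" and j="\<lambda>w. (take i w, drop i w)"])
      (use assms in \<open>auto simp: words_def dest: in_set_takeD in_set_dropD\<close>)
  also have "\<dots> = (\<Sum>u\<in>words d i. (x u)\<^sup>2) * (\<Sum>v\<in>words d (l - i). (y v)\<^sup>2)"
    by (simp add: sum_product sum.cartesian_product power_mult_distrib)
  finally show ?thesis by (simp add: L2_set_def lnorm_def real_sqrt_mult)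
qed

lemma lnorm_tmul: "lnorm d l (tmul N x y) \<le> (\<Sum>k\<le>l. lnorm d k x * lnorm d (l - k) y)"
proof (cases "l \<le> N")
  case False
  have "lnorm d l (tmul N x y) = lnorm d l (\<lambda>_. 0)"
    by (rule lnorm_cong) (use False in \<open>simp add: tmul_def\<close>)
  also have "\<dots> = 0" by (simp add: lnorm_def)
  finally show ?thesis by (simp add: sum_nonneg)
next
  case True
  have "lnorm d l (tmul N x y) = lnorm d l (\<lambda>w. \<Sum>i\<le>l. x (take i w) * y (drop i w))"
    by (rule lnorm_cong) (use True in \<open>simp add: tmul_def\<close>)
  also have "\<dots> \<le> (\<Sum>i\<le>l. L2_set (\<lambda>w. x (take i w) * y (drop i w)) (words d l))"
    unfolding lnorm_L2 by (rule L2_set_sum_le)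
  also have "\<dots> = (\<Sum>k\<le>l. lnorm d k x * lnorm d (l - k) y)"
    by (rule sum.cong) (auto simp: lnorm_prod)
  finally show ?thesis .
qed

definition pats :: "nat \<Rightarrow> nat \<Rightarrow> (nat \<times> bool) list set" where
  "pats i m = {p. (\<forall>x\<in>set p. 1 \<le> fst x) \<and> sum_list (map fst p) = m \<and> length (filter snd p) = i}"

definition wt :: "(nat \<Rightarrow> real) \<Rightarrow> (nat \<Rightarrow> real) \<Rightarrow> (nat \<times> bool) list \<Rightarrow> real" where
  "wt a z p = prod_list (map (\<lambda>x. if snd x then a (fst x) else z (fst x)) p)"

definition BB :: "(nat \<Rightarrow> real) \<Rightarrow> (nat \<Rightarrow> real) \<Rightarrow> nat \<Rightarrow> nat \<Rightarrow> real" where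
  "BB a z i m = (\<Sum>p\<in>pats i m. wt a z p)"

lemma length_le_sum: "(\<forall>x\<in>set p. 1 \<le> fst x) \<Longrightarrow> length p \<le> sum_list (map fst p)"
  by (induction p) auto

lemma finite_pats: "finite (pats i m)"
proof -
  have "pats i m \<subseteq> {xs. set xs \<subseteq> {..m} \<times> UNIV \<and> length xs \<le> m}"
  proof
    fix p assume p: "p \<in> pats i m"
    then have "length p \<le> m" using length_le_sum by (auto simp: pats_def)
    moreover have "set p \<subseteq> {..m} \<times> UNIV"
    proof
      fix x assume "x \<in> set p"
      then have "fst x \<le> sum_list (map fst p)" by (intro member_le_sum_list) auto
      then show "x \<in> {..m} \<times> UNIV" using p by (cases x) (auto simp: pats_def)
    qed
    ultimately show "p \<in> {xs. set xs \<subseteq> {..m} \<times> UNIV \<and> length xs \<le> m}" by simp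
  qed
  then show ?thesis by (rule finite_subset) (intro finite_lists_length_le, simp)
qed

definition KC :: "nat \<Rightarrow> nat \<Rightarrow> nat \<Rightarrow> real" where
  "KC i j l = real (\<Sum>k\<le>l. card (pats i k) * card (pats j (l - k)))"

context
  fixes a z :: "nat \<Rightarrow> real"
  assumes a0: "\<And>l. 0 \<le> a l" and z0: "\<And>l. 0 \<le> z l"
begin

lemma wt_nonneg: "0 \<le> wt a z p"
  unfolding wt_def by (rule prod_list_nonneg) (auto simp: a0 z0)

lemma BB_nonneg: "0 \<le> BB a z i m"
  unfolding BB_def by (intro sum_nonneg wt_nonneg)

lemma wt_le_BB: "p \<in> pats i m \<Longrightarrow> wt a z p \<le> BB a z i m"
  unfolding BB_def by (rule member_le_sum) (auto simp: finite_pats wt_nonneg)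

lemma z_le_BB: "1 \<le> l \<Longrightarrow> z l \<le> BB a z 0 l"
  using wt_le_BB[of "[(l, False)]" 0 l] by (simp add: wt_def pats_def)

lemma a_le_BB: "1 \<le> l \<Longrightarrow> a l \<le> BB a z 1 l"
  using wt_le_BB[of "[(l, True)]" 1 l] by (simp add: wt_def pats_def)

lemma BB_00: "BB a z 0 0 = 1"
proof -
  have "pats 0 0 = {[]}"
  proof -
    have "p = []" if "p \<in> pats 0 0" for p
      using that by (cases p) (auto simp: pats_def)
    then show ?thesis by (auto simp: pats_def)
  qed
  then show ?thesis by (simp add: BB_def wt_def)
qed

lemma conv_le: "(\<Sum>k\<le>l. BB a z i k * BB a z j (l - k)) \<le> KC i j l * BB a z (i + j) l"
proof -
  have "(\<Sum>k\<le>l. BB a z i k * BB a z j (l - k))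
      = (\<Sum>k\<le>l. \<Sum>p\<in>pats i k. \<Sum>q\<in>pats j (l - k). wt a z p * wt a z q)"
    by (simp add: BB_def sum_product)
  also have "\<dots> \<le> (\<Sum>k\<le>l. \<Sum>p\<in>pats i k. \<Sum>q\<in>pats j (l - k). BB a z (i + j) l)"
  proof (intro sum_mono)
    fix k p q assume k: "k \<in> {..l}" and p: "p \<in> pats i k" and q: "q \<in> pats j (l - k)"
    have "p @ q \<in> pats (i + j) l" using k p q by (auto simp: pats_def)
    moreover have "wt a z (p @ q) = wt a z p * wt a z q" by (simp add: wt_def)
    ultimately show "wt a z p * wt a z q \<le> BB a z (i + j) l" using wt_le_BB by metis
  qed
  also have "\<dots> = KC i j l * BB a z (i + j) l"
    by (simp add: KC_def sum_distrib_right mult.assoc)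
  finally show ?thesis .
qed

end

definition KN :: "nat \<Rightarrow> nat \<Rightarrow> nat \<Rightarrow> real" where
  "KN i j n = (\<Sum>l\<le>n. KC i j l)"

lemma KC_nonneg: "0 \<le> KC i j l" unfolding KC_def by (rule of_nat_0_le_iff)

lemma KN_nonneg: "0 \<le> KN i j n" by (simp add: KN_def sum_nonneg KC_nonneg)

lemma KC_le_KN: "l \<le> n \<Longrightarrow> KC i j l \<le> KN i j n"
  unfolding KN_def by (rule member_le_sum) (auto simp: KC_nonneg)

definition maj :: "nat \<Rightarrow> nat \<Rightarrow> (nat \<Rightarrow> real) \<Rightarrow> (nat \<Rightarrow> real) \<Rightarrow> nat \<Rightarrow> real \<Rightarrow> tens \<Rightarrow> bool" where
  "maj d n a z i C x \<longleftrightarrow> (\<forall>l\<le>n. lnorm d l x \<le> C * BB a z i l)"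

context
  fixes a z :: "nat \<Rightarrow> real" and d n :: nat
  assumes a0: "\<And>l. 0 \<le> a l" and z0: "\<And>l. 0 \<le> z l"
begin

lemmas BBn = BB_nonneg[of a z, OF a0 z0]
lemmas BB00 = BB_00[of a z, OF a0 z0]
lemmas zBB = z_le_BB[of a z, OF a0 z0]
lemmas aBB = a_le_BB[of a z, OF a0 z0]
lemmas convle = conv_le[of a z, OF a0 z0]

lemma maj_tmul:
  assumes C1: "0 \<le> C1" and C2: "0 \<le> C2" and x: "maj d n a z i C1 x" and y: "maj d n a z j C2 y"
  shows "maj d n a z (i + j) (C1 * C2 * KN i j n) (tmul N x y)"
  unfolding maj_def
proof (intro allI impI)
  fix l assume ln: "l \<le> n"
  have "lnorm d l (tmul N x y) \<le> (\<Sum>k\<le>l. lnorm d k x * lnorm d (l - k) y)"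
    by (rule lnorm_tmul)
  also have "\<dots> \<le> (\<Sum>k\<le>l. (C1 * BB a z i k) * (C2 * BB a z j (l - k)))"
  proof (rule sum_mono)
    fix k assume "k \<in> {..l}"
    then have "k \<le> n" "l - k \<le> n" using ln by auto
    then show "lnorm d k x * lnorm d (l - k) y \<le> (C1 * BB a z i k) * (C2 * BB a z j (l - k))"
      using x y unfolding maj_def by (intro mult_mono) (auto intro: mult_nonneg_nonneg C1 BBn)
  qed
  also have "\<dots> = C1 * C2 * (\<Sum>k\<le>l. BB a z i k * BB a z j (l - k))"
    by (simp add: sum_distrib_left mult_ac)
  also have "\<dots> \<le> C1 * C2 * (KC i j l * BB a z (i + j) l)"
    by (intro mult_left_mono convle mult_nonneg_nonneg C1 C2)
  also have "\<dots> \<le> C1 * C2 * (KN i j n * BB a z (i + j) l)"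
    by (intro mult_left_mono mult_right_mono KC_le_KN ln BBn mult_nonneg_nonneg C1 C2)
  finally show "lnorm d l (tmul N x y) \<le> C1 * C2 * KN i j n * BB a z (i + j) l"
    by (simp add: mult_ac)
qed

lemma maj_add:
  assumes "maj d n a z i C1 x" "maj d n a z i C2 y"
  shows "maj d n a z i (C1 + C2) (\<lambda>w. x w + y w)"
  unfolding maj_def
proof (intro allI impI)
  fix l assume "l \<le> n"
  then have "lnorm d l x \<le> C1 * BB a z i l" "lnorm d l y \<le> C2 * BB a z i l" using assms by (auto simp: maj_def)
  then show "lnorm d l (\<lambda>w. x w + y w) \<le> (C1 + C2) * BB a z i l"
    using lnorm_add[of d l x y] by (simp add: distrib_right)
qed

lemma maj_scale:
  "maj d n a z i C x \<Longrightarrow> maj d n a z i (\<bar>c\<bar> * C) (\<lambda>w. c * x w)"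
  unfolding maj_def by (simp add: lnorm_scale mult.assoc mult_left_mono)

lemma maj_mono: "maj d n a z i C x \<Longrightarrow> C \<le> C' \<Longrightarrow> maj d n a z i C' x"
  unfolding maj_def using BBn by (meson mult_right_mono order_trans)

lemma maj_zero: "0 \<le> C \<Longrightarrow> maj d n a z i C (\<lambda>_. 0)"
  unfolding maj_def by (simp add: lnorm_def BBn)

lemma maj_tone: "maj d n a z 0 1 tone"
  unfolding maj_def by (auto simp: lnorm_tone BB00 BBn)

lemma maj_X:
  assumes "x [] = 0" "\<And>l. 1 \<le> l \<Longrightarrow> lnorm d l x \<le> z l"
  shows "maj d n a z 0 1 x"
  unfolding maj_def
proof (intro allI impI)
  fix l assume "l \<le> n"
  show "lnorm d l x \<le> 1 * BB a z 0 l"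
  proof (cases "l = 0")
    case True then show ?thesis using assms by (simp add: lnorm_0 BB00)
  next
    case False then show ?thesis using assms(2)[of l] zBB[of l] by simp
  qed
qed

lemma maj_V:
  assumes "x [] = 0" "\<And>l. 1 \<le> l \<Longrightarrow> lnorm d l x \<le> a l"
  shows "maj d n a z 1 1 x"
  unfolding maj_def
proof (intro allI impI)
  fix l assume "l \<le> n"
  show "lnorm d l x \<le> 1 * BB a z 1 l"
  proof (cases "l = 0")
    case True then show ?thesis using assms by (simp add: lnorm_0 BBn)
  next
    case False then show ?thesis using assms(2)[of l] aBB[of l] by simp
  qed
qed

lemma maj_expsum:
  assumes van: "\<And>k. vanish k (F k)" and mj: "\<And>k. k \<le> n \<Longrightarrow> maj d n a z i (C k) (F k)"
    and C0: "\<And>k. 0 \<le> C k"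
  shows "maj d n a z i (\<Sum>k\<le>n. C k) (\<lambda>w. \<Sum>k\<le>N. F k w / fact k)"
  unfolding maj_def
proof (intro allI impI)
  fix l assume ln: "l \<le> n"
  have "lnorm d l (\<lambda>w. \<Sum>k\<le>N. F k w / fact k) \<le> (\<Sum>k\<le>N. lnorm d l (\<lambda>w. F k w / fact k))"
    by (rule lnorm_sum)
  also have "\<dots> \<le> (\<Sum>k\<le>N. if k \<le> n then C k * BB a z i l else 0)"
  proof (rule sum_mono)
    fix k assume "k \<in> {..N}"
    show "lnorm d l (\<lambda>w. F k w / fact k) \<le> (if k \<le> n then C k * BB a z i l else 0)"
    proof (cases "k \<le> n")
      case True
      have "lnorm d l (\<lambda>w. F k w / fact k) = lnorm d l (F k) / fact k" by (simp add: lnorm_div)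
      also have "\<dots> \<le> lnorm d l (F k) / 1"
        by (rule divide_left_mono) (auto simp: fact_ge_1)
      also have "\<dots> \<le> C k * BB a z i l" using mj[OF True] ln by (simp add: maj_def)
      finally show ?thesis using True by simp
    next
      case False
      then have "l < k" using ln by simp
      then have "lnorm d l (F k) = 0" by (intro lnorm_vanish[OF van])
      then show ?thesis using False by (simp add: lnorm_div)
    qed
  qed
  also have "\<dots> = (\<Sum>k\<in>{k\<in>{..N}. k \<le> n}. C k * BB a z i l)"
    by (rule sum.inter_filter[symmetric]) simp
  also have "\<dots> \<le> (\<Sum>k\<le>n. C k * BB a z i l)"
    by (rule sum_mono2) (auto intro: mult_nonneg_nonneg C0 BBn)
  finally show "lnorm d l (\<lambda>w. \<Sum>k\<le>N. F k w / fact k) \<le> (\<Sum>k\<le>n. C k) * BB a z i l"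
    by (simp add: sum_distrib_right)
qed

end

fun Cp :: "nat \<Rightarrow> nat \<Rightarrow> real" where
  "Cp n 0 = 1" | "Cp n (Suc k) = Cp n k * KN 0 0 n"
fun Cd :: "nat \<Rightarrow> nat \<Rightarrow> real" where
  "Cd n 0 = 0" | "Cd n (Suc k) = Cp n k * KN 1 0 n + Cd n k * KN 0 1 n"
fun Cdd :: "nat \<Rightarrow> nat \<Rightarrow> real" where
  "Cdd n 0 = 0" | "Cdd n (Suc k) = 2 * (Cd n k * KN 1 1 n) + Cdd n k * KN 0 2 n"

lemma Cp_nonneg: "0 \<le> Cp n k" by (induction k) (auto simp: KN_nonneg)
lemma Cd_nonneg: "0 \<le> Cd n k" by (induction k) (auto simp: KN_nonneg Cp_nonneg)
lemma Cdd_nonneg: "0 \<le> Cdd n k" by (induction k) (auto simp: KN_nonneg Cd_nonneg)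

definition CE0 :: "nat \<Rightarrow> real" where "CE0 n = (\<Sum>k\<le>n. Cp n k)"
definition CE1 :: "nat \<Rightarrow> real" where "CE1 n = (\<Sum>k\<le>n. Cd n k)"
definition CE2 :: "nat \<Rightarrow> real" where "CE2 n = (\<Sum>k\<le>n. Cdd n k)"

lemma CE_nonneg: "0 \<le> CE0 n" "0 \<le> CE1 n" "0 \<le> CE2 n"
  by (auto simp: CE0_def CE1_def CE2_def sum_nonneg Cp_nonneg Cd_nonneg Cdd_nonneg)

context
  fixes a z :: "nat \<Rightarrow> real" and d n :: nat
  assumes a0: "\<And>l. 0 \<le> a l" and z0: "\<And>l. 0 \<le> z l"
begin

lemmas mtmul = maj_tmul[where a=a and z=z and d=d and n=n, OF a0 z0]
lemmas madd = maj_add[where a=a and z=z and d=d and n=n, OF a0 z0]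
lemmas mscale = maj_scale[where a=a and z=z and d=d and n=n, OF a0 z0]
lemmas mmono = maj_mono[where a=a and z=z and d=d and n=n, OF a0 z0]
lemmas mzero = maj_zero[where a=a and z=z and d=d and n=n, OF a0 z0]
lemmas mtone = maj_tone[where a=a and z=z and d=d and n=n, OF a0 z0]
lemmas mexpsum = maj_expsum[where a=a and z=z and d=d and n=n, OF a0 z0]

lemma maj_path:
  assumes mX: "maj d n a z 0 1 (Xp y v t)" and mV: "maj d n a z 1 1 v"
  shows "maj d n a z 0 (Cp n k) (tpow N (Xp y v t) k) \<and> maj d n a z 1 (Cd n k) (Dk N y v t k)
    \<and> maj d n a z 2 (Cdd n k) (DDk N y v t k)"
proof (induction k)
  case 0 then show ?case by (simp add: mtone mzero)
next
  case (Suc k)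
  then have I1: "maj d n a z 0 (Cp n k) (tpow N (Xp y v t) k)"
    and I2: "maj d n a z 1 (Cd n k) (Dk N y v t k)"
    and I3: "maj d n a z 2 (Cdd n k) (DDk N y v t k)" by auto
  have P: "maj d n a z (0 + 0) (1 * Cp n k * KN 0 0 n) (tmul N (Xp y v t) (tpow N (Xp y v t) k))"
    by (rule mtmul[OF _ _ mX I1]) (auto simp: Cp_nonneg)
  have D1: "maj d n a z (1 + 0) (1 * Cp n k * KN 1 0 n) (tmul N v (tpow N (Xp y v t) k))"
    by (rule mtmul[OF _ _ mV I1]) (auto simp: Cp_nonneg)
  have D2: "maj d n a z (0 + 1) (1 * Cd n k * KN 0 1 n) (tmul N (Xp y v t) (Dk N y v t k))"
    by (rule mtmul[OF _ _ mX I2]) (auto simp: Cd_nonneg)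
  have E1: "maj d n a z (1 + 1) (1 * Cd n k * KN 1 1 n) (tmul N v (Dk N y v t k))"
    by (rule mtmul[OF _ _ mV I2]) (auto simp: Cd_nonneg)
  have E2: "maj d n a z (0 + 2) (1 * Cdd n k * KN 0 2 n) (tmul N (Xp y v t) (DDk N y v t k))"
    by (rule mtmul[OF _ _ mX I3]) (auto simp: Cdd_nonneg)
  have E1': "maj d n a z 2 (\<bar>2\<bar> * (1 * Cd n k * KN 1 1 n)) (\<lambda>w. 2 * tmul N v (Dk N y v t k) w)"
    using mscale[OF E1, of 2] by (simp add: numeral_2_eq_2)
  have D1': "maj d n a z 1 (Cp n k * KN 1 0 n) (tmul N v (tpow N (Xp y v t) k))"
    using D1 by simp
  have D2': "maj d n a z 1 (Cd n k * KN 0 1 n) (tmul N (Xp y v t) (Dk N y v t k))"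
    using D2 by simp
  have E2': "maj d n a z 2 (Cdd n k * KN 0 2 n) (tmul N (Xp y v t) (DDk N y v t k))"
    using E2 by (simp add: numeral_2_eq_2)
  have E1'': "maj d n a z 2 (2 * (Cd n k * KN 1 1 n)) (\<lambda>w. 2 * tmul N v (Dk N y v t k) w)"
    using E1' by simp
  show ?case
    using P madd[OF D1' D2'] madd[OF E1'' E2']
    by (simp add: tpow_Suc)
qed

lemma maj_texp:
  assumes mX: "maj d n a z 0 1 (Xp y v t)" and mV: "maj d n a z 1 1 v"
    and vy: "vanish 1 y" and vv: "vanish 1 v"
  shows "maj d n a z 0 (CE0 n) (texp N (Xp y v t))"
    and "maj d n a z 1 (CE1 n) (ED N y v t)"
    and "maj d n a z 2 (CE2 n) (EDD N y v t)"
  unfolding texp_def ED_def EDD_def CE0_def CE1_def CE2_def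
  by (rule mexpsum; use maj_path[OF mX mV] vanish_tpow vanish_Xp[OF vy vv] vanish_Dk[OF vy vv]
      vanish_DDk[OF vy vv] Cp_nonneg Cd_nonneg Cdd_nonneg in blast)+

end

lemma length_le_sum_nat: "(\<forall>l\<in>set xs. 1 \<le> (l::nat)) \<Longrightarrow> length xs \<le> sum_list xs"
  by (induction xs) auto

lemma finite_comps2: "finite (comps2 n)"
proof -
  have "comps2 n \<subseteq> {xs. set xs \<subseteq> {..n} \<and> length xs \<le> n}"
    using length_le_sum_nat member_le_sum_list by (fastforce simp: comps2_def)
  then show ?thesis by (rule finite_subset) (intro finite_lists_length_le, simp)
qed

lemma wt_split:
  "wt a z p = prod_list (map (\<lambda>x. a (fst x)) (filter snd p)) * prod_list (map (\<lambda>x. z (fst x)) (filter (\<lambda>x. \<not> snd x) p))"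
  by (induction p) (auto simp: wt_def)

lemma sum_split:
  "sum_list (map fst p) = sum_list (map fst (filter snd p)) + sum_list (map fst (filter (\<lambda>x. \<not> snd x) (p :: (nat \<times> bool) list)))"
  by (induction p) auto

lemma zz_nonneg: "0 \<le> zz d dx y dy l"
  by (simp add: zz_def le_max_iff_disj)

lemma BB_le_rhs:
  "BB (\<lambda>l. lnorm d l dx + lnorm d l dy) (zz d dx y dy) 2 n \<le> real (card (pats 2 n)) * rhs_sum d n dx y dy"
proof -
  let ?a = "\<lambda>l. lnorm d l dx + lnorm d l dy"
  let ?z = "zz d dx y dy"
  let ?T = "\<lambda>ls. (lnorm d (ls!0) dx + lnorm d (ls!0) dy) * (lnorm d (ls!1) dx + lnorm d (ls!1) dy)
      * prod_list (map (zz d dx y dy) (drop 2 ls))"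
  have Tnn: "0 \<le> ?T ls" for ls
    by (intro mult_nonneg_nonneg add_nonneg_nonneg lnorm_nonneg prod_list_nonneg) (auto simp: zz_nonneg)
  have "wt ?a ?z p \<le> rhs_sum d n dx y dy" if p: "p \<in> pats 2 n" for p
  proof -
    have "length (filter snd p) = 2" using p by (simp add: pats_def)
    then obtain e1 e2 where e: "filter snd p = [e1, e2]"
      by (metis (no_types, lifting) One_nat_def Suc_1 length_0_conv length_Suc_conv)
    define r where "r = fst e1 # fst e2 # map fst (filter (\<lambda>x. \<not> snd x) p)"
    have e12: "e1 \<in> set p" "e2 \<in> set p" using e by (metis filter_is_subset list.set_intros subsetD)+
    have "r \<in> comps2 n"
      using p e12 sum_split[of p] e by (auto simp: comps2_def pats_def r_def)
    moreover have "wt ?a ?z p = ?T r"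
      by (simp add: wt_split e r_def o_def mult.assoc)
    ultimately show ?thesis unfolding rhs_sum_def
      by (metis (no_types, lifting) Tnn finite_comps2 member_le_sum)
  qed
  then have "BB ?a ?z 2 n \<le> (\<Sum>p\<in>pats 2 n. rhs_sum d n dx y dy)"
    unfolding BB_def by (rule sum_mono)
  then show ?thesis by simp
qed

lemma inT0_trunc: "in_T0 d N x \<Longrightarrow> trunc N x"
  unfolding in_T0_def in_T_def trunc_def by (meson not_le)

lemma inT0_vanish: "in_T0 d N x \<Longrightarrow> vanish 1 x"
  unfolding in_T0_def vanish_def by auto

lemma sigf_eq: "sigf N dx y dy s t =
  tmul N (tmul N (texp N (Xp (\<lambda>_. 0) dx s)) (texp N (Xp y dy t))) (texp N (\<lambda>w. -1 * y w))"
proof -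
  have "tscale s dx = Xp (\<lambda>_. 0) dx s" "tadd y (tscale t dy) = Xp y dy t"
    "tscale (-1) y = (\<lambda>w. -1 * y w)"
    by (auto simp: tscale_def tadd_def Xp_def)
  then show ?thesis by (simp add: sigf_def)
qed

definition Ctot :: "nat \<Rightarrow> real" where
  "Ctot n = CE2 n * CE0 n * KN 2 0 n * CE0 n * KN 2 0 n + CE1 n * CE1 n * KN 1 1 n * CE0 n * KN 2 0 n
     + CE0 n * CE2 n * KN 0 2 n * CE0 n * KN 2 0 n"

definition cc :: "nat \<Rightarrow> real" where
  "cc n = Ctot n * real (card (pats 2 n)) + 1"

lemma Ctot_nonneg: "0 \<le> Ctot n"
  unfolding Ctot_def using CE_nonneg[of n] KN_nonneg by (intro add_nonneg_nonneg mult_nonneg_nonneg) auto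

lemma cc_pos: "0 < cc n"
  unfolding cc_def using Ctot_nonneg[of n] by (simp add: add_nonneg_pos)

lemma final_le:
  assumes "L \<le> K * BB (\<lambda>l. lnorm d l dx + lnorm d l dy) (zz d dx y dy) 2 n" "0 \<le> K" "K \<le> Ctot n"
  shows "L \<le> cc n * rhs_sum d n dx y dy"
proof -
  let ?B = "BB (\<lambda>l. lnorm d l dx + lnorm d l dy) (zz d dx y dy) 2 n"
  have Bnn: "0 \<le> ?B" by (rule BB_nonneg) (auto simp: zz_nonneg)
  have rnn: "0 \<le> rhs_sum d n dx y dy"
    unfolding rhs_sum_def
    by (intro sum_nonneg mult_nonneg_nonneg add_nonneg_nonneg lnorm_nonneg prod_list_nonneg) (auto simp: zz_nonneg)
  have "L \<le> Ctot n * ?B" by (rule order_trans[OF assms(1)]) (rule mult_right_mono[OF assms(3) Bnn])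
  also have "\<dots> \<le> Ctot n * (real (card (pats 2 n)) * rhs_sum d n dx y dy)"
    by (intro mult_left_mono BB_le_rhs Ctot_nonneg)
  also have "\<dots> \<le> cc n * rhs_sum d n dx y dy"
    unfolding cc_def using rnn by (simp add: algebra_simps)
  finally show ?thesis .
qed

lemma lnorm_Xp_bound:
  assumes "0 \<le> t" "t \<le> 1"
  shows "lnorm d l (Xp y v t) \<le> max (lnorm d l y) (lnorm d l (tadd y v))"
proof -
  have "Xp y v t = (\<lambda>w. (1 - t) * y w + t * tadd y v w)"
    by (auto simp: Xp_def tadd_def algebra_simps)
  then have "lnorm d l (Xp y v t) \<le> lnorm d l (\<lambda>w. (1 - t) * y w) + lnorm d l (\<lambda>w. t * tadd y v w)"
    using lnorm_add by metis
  also have "\<dots> = (1 - t) * lnorm d l y + t * lnorm d l (tadd y v)"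
    using assms by (simp add: lnorm_scale)
  also have "\<dots> \<le> (1 - t) * max (lnorm d l y) (lnorm d l (tadd y v)) + t * max (lnorm d l y) (lnorm d l (tadd y v))"
    using assms by (intro add_mono mult_left_mono) auto
  also have "\<dots> = max (lnorm d l y) (lnorm d l (tadd y v))" by (simp add: algebra_simps)
  finally show ?thesis .
qed

lemma texp_inv':
  assumes "trunc N x" "vanish 1 x"
  shows "tmul N (texp N x) (texp N (\<lambda>w. - x w)) = tone"
  using texp_inv[OF assms] by simp

lemma partA:
  assumes hy: "in_T0 d N y"
  shows "sigf N dx y dy 0 0 = tone"
proof -
  have "Xp (\<lambda>_. 0) dx 0 = (\<lambda>_. 0)" by (simp add: Xp_def)
  then show ?thesis
    unfolding sigf_eq
    by (simp add: texp_zero tmul_tone_left trunc_texp texp_inv'[OF inT0_trunc[OF hy] inT0_vanish[OF hy]])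
qed

lemma partB:
  assumes N1: "1 \<le> N" and hx: "in_T0 d N dx" and hy: "in_T0 d N y"
  shows "\<forall>w. ((\<lambda>s. sigf N dx y dy s 0 w) has_real_derivative dx w) (at 0 within {0..1})"
proof
  fix w
  let ?C = "texp N (\<lambda>w. -1 * y w)"
  have "((\<lambda>s. sigf N dx y dy s 0 w) has_real_derivative
      tmul N (tmul N (ED N (\<lambda>_. 0) dx 0) (texp N (Xp y dy 0))) ?C w) (at 0 within {0..1})"
    unfolding sigf_eq by (intro deriv_tmul_left deriv_texp)
  moreover have "tmul N (tmul N (ED N (\<lambda>_. 0) dx 0) (texp N (Xp y dy 0))) ?C = dx"
    using ED_at_zero[OF inT0_trunc[OF hx] N1]
    by (simp add: tmul_assoc texp_inv'[OF inT0_trunc[OF hy] inT0_vanish[OF hy]] tmul_tone_right inT0_trunc[OF hx])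
  ultimately show "((\<lambda>s. sigf N dx y dy s 0 w) has_real_derivative dx w) (at 0 within {0..1})"
    by simp
qed

lemma partC:
  assumes hy: "in_T0 d N y" and hdy: "in_T0 d N dy"
  shows "\<forall>w. ((\<lambda>t. sigf N dx y dy 0 t w) has_real_derivative tG N y dy w) (at 0 within {0..1})"
proof
  fix w
  let ?C = "texp N (\<lambda>w. -1 * y w)"
  have "((\<lambda>t. sigf N dx y dy 0 t w) has_real_derivative
      tmul N (tmul N (texp N (Xp (\<lambda>_. 0) dx 0)) (ED N y dy 0)) ?C w) (at 0 within {0..1})"
    unfolding sigf_eq by (intro deriv_tmul_left deriv_tmul_right deriv_texp)
  moreover have "Xp (\<lambda>_. 0) dx 0 = (\<lambda>_. 0)" by (simp add: Xp_def)
  moreover have "tmul N (ED N y dy 0) ?C = tG N y dy"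
    by (rule tG_identity[OF inT0_trunc[OF hy] inT0_trunc[OF hdy] inT0_vanish[OF hy] inT0_vanish[OF hdy]])
  ultimately show "((\<lambda>t. sigf N dx y dy 0 t w) has_real_derivative tG N y dy w) (at 0 within {0..1})"
    by (simp add: texp_zero tmul_tone_left trunc_ED)
qed

lemma lnorm_neg: "lnorm d l (\<lambda>w. - f w) = lnorm d l f"
  using lnorm_scale[of d l "-1" f] by simp

lemma partD:
  assumes hx: "in_T0 d N dx" and hy: "in_T0 d N y" and hdy: "in_T0 d N dy"
  shows "\<forall>n. 2 \<le> n \<longrightarrow> n \<le> N \<longrightarrow>
        (\<exists>f1 f2 f11 f12 f22 :: real \<Rightarrow> real \<Rightarrow> tens.
          (\<forall>s\<in>{0..1}. \<forall>t\<in>{0..1}. \<forall>w\<in>words d n.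
             ((\<lambda>s'. sigf N dx y dy s' t w) has_real_derivative f1 s t w) (at s within {0..1}) \<and>
             ((\<lambda>t'. sigf N dx y dy s t' w) has_real_derivative f2 s t w) (at t within {0..1}) \<and>
             ((\<lambda>s'. f1 s' t w) has_real_derivative f11 s t w) (at s within {0..1}) \<and>
             ((\<lambda>t'. f1 s t' w) has_real_derivative f12 s t w) (at t within {0..1}) \<and>
             ((\<lambda>t'. f2 s t' w) has_real_derivative f22 s t w) (at t within {0..1})) \<and>
          (\<forall>s\<in>{0..1}. \<forall>t\<in>{0..1}.
             max (lnorm d n (f11 s t)) (max (lnorm d n (f12 s t)) (lnorm d n (f22 s t)))
               \<le> cc n * rhs_sum d n dx y dy))"
proof (intro allI impI)
  fix n assume n2: "2 \<le> n" and nN: "n \<le> N"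
  define C where "C = texp N (\<lambda>w. -1 * y w)"
  define f1 where "f1 = (\<lambda>s t. tmul N (tmul N (ED N (\<lambda>_. 0) dx s) (texp N (Xp y dy t))) C)"
  define f2 where "f2 = (\<lambda>s t. tmul N (tmul N (texp N (Xp (\<lambda>_. 0) dx s)) (ED N y dy t)) C)"
  define f11 where "f11 = (\<lambda>s t. tmul N (tmul N (EDD N (\<lambda>_. 0) dx s) (texp N (Xp y dy t))) C)"
  define f12 where "f12 = (\<lambda>s t. tmul N (tmul N (ED N (\<lambda>_. 0) dx s) (ED N y dy t)) C)"
  define f22 where "f22 = (\<lambda>s t. tmul N (tmul N (texp N (Xp (\<lambda>_. 0) dx s)) (EDD N y dy t)) C)"
  have D: "\<forall>s\<in>{0..1}. \<forall>t\<in>{0..1}. \<forall>w\<in>words d n.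
             ((\<lambda>s'. sigf N dx y dy s' t w) has_real_derivative f1 s t w) (at s within {0..1}) \<and>
             ((\<lambda>t'. sigf N dx y dy s t' w) has_real_derivative f2 s t w) (at t within {0..1}) \<and>
             ((\<lambda>s'. f1 s' t w) has_real_derivative f11 s t w) (at s within {0..1}) \<and>
             ((\<lambda>t'. f1 s t' w) has_real_derivative f12 s t w) (at t within {0..1}) \<and>
             ((\<lambda>t'. f2 s t' w) has_real_derivative f22 s t w) (at t within {0..1})"
    unfolding f1_def f2_def f11_def f12_def f22_def sigf_eq C_def
    by (intro ballI conjI deriv_tmul_left deriv_tmul_right deriv_texp deriv_ED)
  have Bd: "\<forall>s\<in>{0..1}. \<forall>t\<in>{0..1}.
             max (lnorm d n (f11 s t)) (max (lnorm d n (f12 s t)) (lnorm d n (f22 s t)))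
               \<le> cc n * rhs_sum d n dx y dy"
  proof (intro ballI)
    fix s t :: real assume s: "s \<in> {0..1}" and t: "t \<in> {0..1}"
    define a where "a = (\<lambda>l. lnorm d l dx + lnorm d l dy)"
    define z where "z = zz d dx y dy"
    have a0: "\<And>l. 0 \<le> a l" by (simp add: a_def add_nonneg_nonneg)
    have z0: "\<And>l. 0 \<le> z l" by (simp add: z_def zz_nonneg)
    note mt = maj_tmul[where a=a and z=z and d=d and n=n, OF a0 z0]
    note mX = maj_X[where a=a and z=z and d=d and n=n, OF a0 z0]
    note mV = maj_V[where a=a and z=z and d=d and n=n, OF a0 z0]
    note mE = maj_texp[where a=a and z=z and d=d and n=n, OF a0 z0]
    note vx = inT0_vanish[OF hx] and vy = inT0_vanish[OF hy] and vdy = inT0_vanish[OF hdy]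
    have x0: "dx [] = 0" "y [] = 0" "dy [] = 0" using hx hy hdy by (auto simp: in_T0_def)
    have zx: "lnorm d l dx \<le> z l" "lnorm d l y \<le> z l" "lnorm d l (tadd y dy) \<le> z l" for l
      by (auto simp: z_def zz_def)
    have ax: "lnorm d l dx \<le> a l" "lnorm d l dy \<le> a l" for l
      by (auto simp: a_def)
    have XA: "maj d n a z 0 1 (Xp (\<lambda>_. 0) dx s)"
    proof (rule mX)
      show "Xp (\<lambda>_. 0) dx s [] = 0" using x0 by (simp add: Xp_def)
      fix l
      have "Xp (\<lambda>_. 0) dx s = (\<lambda>w. s * dx w)" by (simp add: Xp_def)
      then have "lnorm d l (Xp (\<lambda>_. 0) dx s) = \<bar>s\<bar> * lnorm d l dx" by (simp add: lnorm_scale)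
      also have "\<dots> \<le> 1 * lnorm d l dx" using s by (intro mult_right_mono) auto
      finally show "lnorm d l (Xp (\<lambda>_. 0) dx s) \<le> z l" using zx(1)[of l] by simp
    qed
    have VA: "maj d n a z 1 1 dx" by (rule mV) (use x0 ax in auto)
    have XB: "maj d n a z 0 1 (Xp y dy t)"
    proof (rule mX)
      show "Xp y dy t [] = 0" using x0 by (simp add: Xp_def)
      fix l
      show "lnorm d l (Xp y dy t) \<le> z l"
        using lnorm_Xp_bound[of t d l y dy] t zx[of l] by auto
    qed
    have VB: "maj d n a z 1 1 dy" by (rule mV) (use x0 ax in auto)
    have XC: "maj d n a z 0 1 (Xp (\<lambda>w. -1 * y w) (\<lambda>_. 0) 0)"
      by (rule mX) (use x0 zx in \<open>auto simp: lnorm_neg\<close>)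
    have VC: "maj d n a z 1 1 (\<lambda>_. 0)" by (rule mV) (auto simp: lnorm_def a0)
    have vC: "vanish 1 (\<lambda>w. -1 * y w)" by (rule vanish_scale[OF vy])
    note A = mE[OF XA VA vanish_zero vx]
    note B = mE[OF XB VB vy vdy]
    have C0: "maj d n a z 0 (CE0 n) C"
      using mE(1)[OF XC VC vC vanish_zero] by (simp only: Xp_0 C_def)
    note nn = CE_nonneg[of n] KN_nonneg
    have M11: "maj d n a z ((2 + 0) + 0) (CE2 n * CE0 n * KN 2 0 n * CE0 n * KN (2 + 0) 0 n) (f11 s t)"
      unfolding f11_def by (rule mt[OF _ _ mt[OF _ _ A(3) B(1)] C0]) (use nn in auto)
    have M12: "maj d n a z ((1 + 1) + 0) (CE1 n * CE1 n * KN 1 1 n * CE0 n * KN (1 + 1) 0 n) (f12 s t)"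
      unfolding f12_def by (rule mt[OF _ _ mt[OF _ _ A(2) B(2)] C0]) (use nn in auto)
    have M22: "maj d n a z ((0 + 2) + 0) (CE0 n * CE2 n * KN 0 2 n * CE0 n * KN (0 + 2) 0 n) (f22 s t)"
      unfolding f22_def by (rule mt[OF _ _ mt[OF _ _ A(1) B(3)] C0]) (use nn in auto)
    have L11: "lnorm d n (f11 s t) \<le> (CE2 n * CE0 n * KN 2 0 n * CE0 n * KN 2 0 n) * BB a z 2 n"
      using M11 unfolding maj_def by simp
    have L12: "lnorm d n (f12 s t) \<le> (CE1 n * CE1 n * KN 1 1 n * CE0 n * KN 2 0 n) * BB a z 2 n"
      using M12 unfolding maj_def by (simp add: numeral_2_eq_2)
    have L22: "lnorm d n (f22 s t) \<le> (CE0 n * CE2 n * KN 0 2 n * CE0 n * KN 2 0 n) * BB a z 2 n"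
      using M22 unfolding maj_def by (simp add: numeral_2_eq_2)
    have K: "0 \<le> CE2 n * CE0 n * KN 2 0 n * CE0 n * KN 2 0 n"
      "0 \<le> CE1 n * CE1 n * KN 1 1 n * CE0 n * KN 2 0 n"
      "0 \<le> CE0 n * CE2 n * KN 0 2 n * CE0 n * KN 2 0 n"
      using nn by auto
    have "lnorm d n (f11 s t) \<le> cc n * rhs_sum d n dx y dy"
      by (rule final_le[OF L11[unfolded a_def z_def] K(1)]) (use K in \<open>simp add: Ctot_def\<close>)
    moreover have "lnorm d n (f12 s t) \<le> cc n * rhs_sum d n dx y dy"
      by (rule final_le[OF L12[unfolded a_def z_def] K(2)]) (use K in \<open>simp add: Ctot_def\<close>)
    moreover have "lnorm d n (f22 s t) \<le> cc n * rhs_sum d n dx y dy"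
      by (rule final_le[OF L22[unfolded a_def z_def] K(3)]) (use K in \<open>simp add: Ctot_def\<close>)
    ultimately show "max (lnorm d n (f11 s t)) (max (lnorm d n (f12 s t)) (lnorm d n (f22 s t)))
               \<le> cc n * rhs_sum d n dx y dy" by simp
  qed
  show "\<exists>f1 f2 f11 f12 f22 :: real \<Rightarrow> real \<Rightarrow> tens.
          (\<forall>s\<in>{0..1}. \<forall>t\<in>{0..1}. \<forall>w\<in>words d n.
             ((\<lambda>s'. sigf N dx y dy s' t w) has_real_derivative f1 s t w) (at s within {0..1}) \<and>
             ((\<lambda>t'. sigf N dx y dy s t' w) has_real_derivative f2 s t w) (at t within {0..1}) \<and>
             ((\<lambda>s'. f1 s' t w) has_real_derivative f11 s t w) (at s within {0..1}) \<and>
             ((\<lambda>t'. f1 s t' w) has_real_derivative f12 s t w) (at t within {0..1}) \<and>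
             ((\<lambda>t'. f2 s t' w) has_real_derivative f22 s t w) (at t within {0..1})) \<and>
          (\<forall>s\<in>{0..1}. \<forall>t\<in>{0..1}.
             max (lnorm d n (f11 s t)) (max (lnorm d n (f12 s t)) (lnorm d n (f22 s t)))
               \<le> cc n * rhs_sum d n dx y dy)"
    using D Bd by blast
qed

theorem lemma7p10:
  shows "\<exists>c :: nat \<Rightarrow> real. (\<forall>n. 0 < c n) \<and>
    (\<forall>(d::nat) (N::nat) dx y dy. 1 \<le> N \<longrightarrow> in_T0 d N dx \<longrightarrow> in_T0 d N y \<longrightarrow> in_T0 d N dy \<longrightarrow>
      sigf N dx y dy 0 0 = tone \<and>
      (\<forall>w. ((\<lambda>s. sigf N dx y dy s 0 w) has_real_derivative dx w) (at 0 within {0..1})) \<and>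
      (\<forall>w. ((\<lambda>t. sigf N dx y dy 0 t w) has_real_derivative tG N y dy w) (at 0 within {0..1})) \<and>
      (\<forall>n. 2 \<le> n \<longrightarrow> n \<le> N \<longrightarrow>
        (\<exists>f1 f2 f11 f12 f22 :: real \<Rightarrow> real \<Rightarrow> tens.
          (\<forall>s\<in>{0..1}. \<forall>t\<in>{0..1}. \<forall>w\<in>words d n.
             ((\<lambda>s'. sigf N dx y dy s' t w) has_real_derivative f1 s t w) (at s within {0..1}) \<and>
             ((\<lambda>t'. sigf N dx y dy s t' w) has_real_derivative f2 s t w) (at t within {0..1}) \<and>
             ((\<lambda>s'. f1 s' t w) has_real_derivative f11 s t w) (at s within {0..1}) \<and>
             ((\<lambda>t'. f1 s t' w) has_real_derivative f12 s t w) (at t within {0..1}) \<and>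
             ((\<lambda>t'. f2 s t' w) has_real_derivative f22 s t w) (at t within {0..1})) \<and>
          (\<forall>s\<in>{0..1}. \<forall>t\<in>{0..1}.
             max (lnorm d n (f11 s t)) (max (lnorm d n (f12 s t)) (lnorm d n (f22 s t)))
               \<le> c n * rhs_sum d n dx y dy))))"
proof -
  have "\<forall>(d::nat) (N::nat) dx y dy. 1 \<le> N \<longrightarrow> in_T0 d N dx \<longrightarrow> in_T0 d N y \<longrightarrow> in_T0 d N dy \<longrightarrow>
      sigf N dx y dy 0 0 = tone \<and>
      (\<forall>w. ((\<lambda>s. sigf N dx y dy s 0 w) has_real_derivative dx w) (at 0 within {0..1})) \<and>
      (\<forall>w. ((\<lambda>t. sigf N dx y dy 0 t w) has_real_derivative tG N y dy w) (at 0 within {0..1})) \<and>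
      (\<forall>n. 2 \<le> n \<longrightarrow> n \<le> N \<longrightarrow>
        (\<exists>f1 f2 f11 f12 f22 :: real \<Rightarrow> real \<Rightarrow> tens.
          (\<forall>s\<in>{0..1}. \<forall>t\<in>{0..1}. \<forall>w\<in>words d n.
             ((\<lambda>s'. sigf N dx y dy s' t w) has_real_derivative f1 s t w) (at s within {0..1}) \<and>
             ((\<lambda>t'. sigf N dx y dy s t' w) has_real_derivative f2 s t w) (at t within {0..1}) \<and>
             ((\<lambda>s'. f1 s' t w) has_real_derivative f11 s t w) (at s within {0..1}) \<and>
             ((\<lambda>t'. f1 s t' w) has_real_derivative f12 s t w) (at t within {0..1}) \<and>
             ((\<lambda>t'. f2 s t' w) has_real_derivative f22 s t w) (at t within {0..1})) \<and>
          (\<forall>s\<in>{0..1}. \<forall>t\<in>{0..1}.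
             max (lnorm d n (f11 s t)) (max (lnorm d n (f12 s t)) (lnorm d n (f22 s t)))
               \<le> cc n * rhs_sum d n dx y dy)))"
  proof (intro allI impI)
    fix d N :: nat and dx y dy :: tens
    assume N1: "1 \<le> N" and hx: "in_T0 d N dx" and hy: "in_T0 d N y" and hdy: "in_T0 d N dy"
    show "sigf N dx y dy 0 0 = tone \<and>
      (\<forall>w. ((\<lambda>s. sigf N dx y dy s 0 w) has_real_derivative dx w) (at 0 within {0..1})) \<and>
      (\<forall>w. ((\<lambda>t. sigf N dx y dy 0 t w) has_real_derivative tG N y dy w) (at 0 within {0..1})) \<and>
      (\<forall>n. 2 \<le> n \<longrightarrow> n \<le> N \<longrightarrow>
        (\<exists>f1 f2 f11 f12 f22 :: real \<Rightarrow> real \<Rightarrow> tens.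
          (\<forall>s\<in>{0..1}. \<forall>t\<in>{0..1}. \<forall>w\<in>words d n.
             ((\<lambda>s'. sigf N dx y dy s' t w) has_real_derivative f1 s t w) (at s within {0..1}) \<and>
             ((\<lambda>t'. sigf N dx y dy s t' w) has_real_derivative f2 s t w) (at t within {0..1}) \<and>
             ((\<lambda>s'. f1 s' t w) has_real_derivative f11 s t w) (at s within {0..1}) \<and>
             ((\<lambda>t'. f1 s t' w) has_real_derivative f12 s t w) (at t within {0..1}) \<and>
             ((\<lambda>t'. f2 s t' w) has_real_derivative f22 s t w) (at t within {0..1})) \<and>
          (\<forall>s\<in>{0..1}. \<forall>t\<in>{0..1}.
             max (lnorm d n (f11 s t)) (max (lnorm d n (f12 s t)) (lnorm d n (f22 s t)))
               \<le> cc n * rhs_sum d n dx y dy)))"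
      using partA[OF hy] partB[OF N1 hx hy] partC[OF hy hdy] partD[OF hx hy hdy] by blast
  qed
  then show ?thesis using cc_pos by blast
qed

end
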